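(* For every $\varepsilon>0$, the following algorithm \textsc{DP-AdvRand}$(\varepsilon)$ is $(\varepsilon,0)$-differentially private with respect to the multiset of constraints of a Max-$k$XOR instance with $m$ constraints on $n$ variables: (1) choose $s\in\{1,\dots,\lceil\log_2k\rceil\}$ uniformly at random and put each index of $[n]$ independently into $U$ with probability $p=2^{-s}$; let $F=[n]\setminus U$; (2) draw $x_F\in\{\pm1\}^F$ uniformly at random; (3) for each $j\in U$ let $\mathsf{Act}(j)$ be the set of constraints whose scope contains $j$ and no other index of $U$, let $\Lambda_j=\frac1{\sqrt m}\sum_{\ell\in\mathsf{Act}(j)}b_\ell\prod_{i\in S_\ell\setminus\{j\}}x_i$ (using the values $x_F$), and independently set $x_j=+1$ with probability $\frac{1+\tanh(\varepsilon'\Lambda_j)}2$ and $x_j=-1$ otherwise, where $\varepsilon'=\frac{\varepsilon\sqrt m}2$; (4) pick $r\in\{0,1,\dots,k\}$ uniformly, set $\eta=\cos(r\pi/k)/2$, and independently for each $j\in U$ flip $x_j\leftarrow-x_j$ with probability $(1-\eta)/2$; (5) output $x=(x_F,x_U)$.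
   Context: A Max-$k$XOR instance consists of $m$ constraints indexed by $\ell\in[m]$, each with a scope $S_\ell\subseteq[n]$ of size $k$ and a sign $b_\ell\in\{\pm1\}$, with predicate $P_\ell(x_{S_\ell})=\frac12+\frac{b_\ell}2\prod_{i\in S_\ell}x_i$; all scopes are assumed distinct as sets. Two instances are neighboring if one is obtained from the other by adding or removing one constraint. An algorithm $\mathcal M$ is $(\varepsilon,0)$-DP if $\Pr[\mathcal M(\Phi)\in T]\le e^\varepsilon\Pr[\mathcal M(\Phi')\in T]$ for all neighboring $\Phi,\Phi'$ and all output sets $T$. *)

theory Defs
  imports "HOL-Probability.Probability"
begin

text \<open>Variables are indexed by 0..<n (the paper's [n]); assignments are
  functions nat => int with values in {1,-1} on 0..<n and the default 1 elsewhere.\<close>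

type_synonym constr = "nat set \<times> int"
type_synonym kxor_inst = "constr multiset"

definition valid_instance :: "nat \<Rightarrow> nat \<Rightarrow> kxor_inst \<Rightarrow> bool" where
  "valid_instance n k \<Phi> \<longleftrightarrow>
     (\<forall>c \<in># \<Phi>. fst c \<subseteq> {0..<n} \<and> card (fst c) = k \<and> snd c \<in> {1, -1})
     \<and> (\<forall>S. count (image_mset fst \<Phi>) S \<le> 1)"

definition neighboring :: "kxor_inst \<Rightarrow> kxor_inst \<Rightarrow> bool" where
  "neighboring \<Phi> \<Phi>' \<longleftrightarrow> (\<exists>c. \<Phi>' = \<Phi> + {#c#} \<or> \<Phi> = \<Phi>' + {#c#})"

definition pure_DP :: "nat \<Rightarrow> nat \<Rightarrow> real \<Rightarrow> (kxor_inst \<Rightarrow> 'b pmf) \<Rightarrow> bool" where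
  "pure_DP n k \<epsilon> M \<longleftrightarrow>
     (\<forall>\<Phi> \<Phi>' T. valid_instance n k \<Phi> \<and> valid_instance n k \<Phi>' \<and> neighboring \<Phi> \<Phi>' \<longrightarrow>
        measure_pmf.prob (M \<Phi>) T \<le> exp \<epsilon> * measure_pmf.prob (M \<Phi>') T)"

definition sign_of :: "bool \<Rightarrow> int" where
  "sign_of b = (if b then 1 else -1)"

definition rademacher :: "int pmf" where
  "rademacher = map_pmf sign_of (bernoulli_pmf (1/2))"

text \<open>Lambda_j (unscaled by epsilon'), computed from the values x (only the
  values on F are used since scopes of active constraints meet U only in j).\<close>
definition Lam :: "kxor_inst \<Rightarrow> (nat \<Rightarrow> bool) \<Rightarrow> (nat \<Rightarrow> int) \<Rightarrow> nat \<Rightarrow> real" where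
  "Lam \<Phi> U x j = 1 / sqrt (real (size \<Phi>)) *
     (\<Sum>\<^sub># (image_mset (\<lambda>c. real_of_int (snd c) * (\<Prod>i \<in> fst c - {j}. real_of_int (x i)))
        (filter_mset (\<lambda>c. j \<in> fst c \<and> {i \<in> fst c. U i} = {j}) \<Phi>)))"

definition DP_AdvRand :: "nat \<Rightarrow> nat \<Rightarrow> real \<Rightarrow> kxor_inst \<Rightarrow> (nat \<Rightarrow> int) pmf" where
  "DP_AdvRand n k \<epsilon> \<Phi> =
    (let m = size \<Phi>; \<epsilon>' = \<epsilon> * sqrt (real m) / 2 in
     bind_pmf (pmf_of_set {1..nat \<lceil>log 2 (real k)\<rceil>}) (\<lambda>s.
     bind_pmf (Pi_pmf {0..<n} False (\<lambda>_. bernoulli_pmf (1 / 2 ^ s))) (\<lambda>U.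
     bind_pmf (Pi_pmf {i \<in> {0..<n}. \<not> U i} 1 (\<lambda>_. rademacher)) (\<lambda>xF.
     bind_pmf (Pi_pmf {j \<in> {0..<n}. U j} 1
        (\<lambda>j. map_pmf sign_of (bernoulli_pmf ((1 + tanh (\<epsilon>' * Lam \<Phi> U xF j)) / 2)))) (\<lambda>xU.
     bind_pmf (pmf_of_set {0..k}) (\<lambda>r.
     let \<eta> = cos (real r * pi / real k) / 2 in
     bind_pmf (Pi_pmf {j \<in> {0..<n}. U j} False (\<lambda>_. bernoulli_pmf ((1 - \<eta>) / 2))) (\<lambda>flip.
     return_pmf (\<lambda>i. if i < n then
                        (if U i then (if flip i then - xU i else xU i) else xF i)
                      else 1))))))))"

end

theory Submission
  imports Defs
begin

definition pdp :: "real \<Rightarrow> 'a pmf \<Rightarrow> 'a pmf \<Rightarrow> bool" where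
  "pdp e M M' \<longleftrightarrow> (\<forall>x. pmf M x \<le> e * pmf M' x)"

lemma pdp_prob:
  assumes "pdp e M M'" "e \<ge> 0"
  shows "measure_pmf.prob M T \<le> e * measure_pmf.prob M' T"
proof -
  have "ennreal (measure_pmf.prob M T) = emeasure (measure_pmf M) T"
    by (simp add: measure_pmf.emeasure_eq_measure)
  also have "\<dots> = (\<integral>\<^sup>+ x. pmf M x \<partial>count_space T)" by (simp add: nn_integral_pmf)
  also have "\<dots> \<le> (\<integral>\<^sup>+ x. ennreal e * pmf M' x \<partial>count_space T)"
    using assms by (intro nn_integral_mono) (auto simp: pdp_def ennreal_mult[symmetric] pmf_nonneg)
  also have "\<dots> = ennreal e * emeasure (measure_pmf M') T"
    by (simp add: nn_integral_cmult nn_integral_pmf)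
  also have "\<dots> = ennreal (e * measure_pmf.prob M' T)"
    using assms by (simp add: measure_pmf.emeasure_eq_measure ennreal_mult)
  finally show ?thesis
    using assms by (simp add: ennreal_le_iff)
qed

lemma pdp_bind_same:
  assumes "\<And>a. a \<in> set_pmf A \<Longrightarrow> pdp e (f a) (g a)" "e \<ge> 0"
  shows "pdp e (bind_pmf A f) (bind_pmf A g)"
  unfolding pdp_def
proof
  fix x
  have "ennreal (pmf (bind_pmf A f) x) = (\<integral>\<^sup>+a. pmf (f a) x \<partial>measure_pmf A)"
    by (rule ennreal_pmf_bind)
  also have "\<dots> \<le> (\<integral>\<^sup>+a. ennreal e * pmf (g a) x \<partial>measure_pmf A)"
    using assms by (intro nn_integral_mono_AE)
      (auto simp: AE_measure_pmf_iff pdp_def ennreal_mult[symmetric] pmf_nonneg)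
  also have "\<dots> = ennreal e * pmf (bind_pmf A g) x"
    by (simp add: nn_integral_cmult ennreal_pmf_bind)
  also have "\<dots> = ennreal (e * pmf (bind_pmf A g) x)"
    using assms by (simp add: ennreal_mult)
  finally show "pmf (bind_pmf A f) x \<le> e * pmf (bind_pmf A g) x"
    using assms by (simp add: ennreal_le_iff)
qed

lemma pdp_bind_post:
  assumes "pdp e M M'" "e \<ge> 0"
  shows "pdp e (bind_pmf M f) (bind_pmf M' f)"
  unfolding pdp_def
proof
  fix x
  have "ennreal (pmf (bind_pmf M f) x) = (\<integral>\<^sup>+a. pmf (f a) x \<partial>measure_pmf M)"
    by (rule ennreal_pmf_bind)
  also have "\<dots> = (\<integral>\<^sup>+a. ennreal (pmf M a) * pmf (f a) x \<partial>count_space UNIV)"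
    by (rule nn_integral_measure_pmf)
  also have "\<dots> \<le> (\<integral>\<^sup>+a. ennreal e * (ennreal (pmf M' a) * pmf (f a) x) \<partial>count_space UNIV)"
  proof (intro nn_integral_mono)
    fix a
    have "ennreal (pmf M a) \<le> ennreal e * ennreal (pmf M' a)"
      using assms by (auto simp: pdp_def ennreal_mult[symmetric] pmf_nonneg)
    then show "ennreal (pmf M a) * pmf (f a) x \<le> ennreal e * (ennreal (pmf M' a) * pmf (f a) x)"
      by (metis mult.assoc mult_right_mono zero_le)
  qed
  also have "\<dots> = ennreal e * (\<integral>\<^sup>+a. pmf (f a) x \<partial>measure_pmf M')"
    by (simp add: nn_integral_cmult nn_integral_measure_pmf)
  also have "\<dots> = ennreal (e * pmf (bind_pmf M' f) x)"
    using assms by (simp add: ennreal_mult ennreal_pmf_bind)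
  finally show "pmf (bind_pmf M f) x \<le> e * pmf (bind_pmf M' f) x"
    using assms by (simp add: ennreal_le_iff)
qed

lemma pdp_Pi:
  assumes "finite A" "\<And>i. i \<in> A \<Longrightarrow> i \<noteq> jz \<Longrightarrow> f i = g i" "pdp e (f jz) (g jz)" "e \<ge> 1"
  shows "pdp e (Pi_pmf A d f) (Pi_pmf A d g)"
  unfolding pdp_def
proof
  fix x
  show "pmf (Pi_pmf A d f) x \<le> e * pmf (Pi_pmf A d g) x"
  proof (cases "\<forall>y. y \<notin> A \<longrightarrow> x y = d")
    case False then show ?thesis using assms by (auto simp: pmf_Pi)
  next
    case True
    show ?thesis
    proof (cases "jz \<in> A")
      case False
      then have "(\<Prod>i\<in>A. pmf (f i) (x i)) = (\<Prod>i\<in>A. pmf (g i) (x i))"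
        using assms by (intro prod.cong) (auto, metis)
      moreover have "(\<Prod>i\<in>A. pmf (g i) (x i)) \<ge> 0" by (simp add: prod_nonneg)
      ultimately show ?thesis using True assms
        by (simp add: pmf_Pi) (metis mult_le_cancel_right1 not_le order_less_le)
    next
      case j: True
      have "(\<Prod>i\<in>A. pmf (f i) (x i)) = pmf (f jz) (x jz) * (\<Prod>i\<in>A-{jz}. pmf (f i) (x i))"
        using assms j by (simp add: prod.remove)
      also have "(\<Prod>i\<in>A-{jz}. pmf (f i) (x i)) = (\<Prod>i\<in>A-{jz}. pmf (g i) (x i))"
        using assms by (intro prod.cong) auto
      also have "pmf (f jz) (x jz) * (\<Prod>i\<in>A-{jz}. pmf (g i) (x i)) \<le>
          (e * pmf (g jz) (x jz)) * (\<Prod>i\<in>A-{jz}. pmf (g i) (x i))"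
        using assms by (intro mult_right_mono) (auto simp: pdp_def prod_nonneg)
      also have "\<dots> = e * (\<Prod>i\<in>A. pmf (g i) (x i))"
        using assms j by (simp add: prod.remove)
      finally show ?thesis using True assms by (simp add: pmf_Pi)
    qed
  qed
qed

lemma sign_of_inj: "inj sign_of"
  by (auto simp: inj_def sign_of_def)

lemma pmf_sign_bern:
  assumes "0 \<le> p" "p \<le> 1"
  shows "pmf (map_pmf sign_of (bernoulli_pmf p)) y =
     (if y = 1 then p else if y = -1 then 1 - p else 0)"
proof -
  have r: "range sign_of = {1, -1}" by (auto simp: sign_of_def image_def)
  show ?thesis
  proof (cases "y \<in> range sign_of")
    case True
    then obtain b where "y = sign_of b" by auto
    moreover have pm: "pmf (map_pmf sign_of (bernoulli_pmf p)) (sign_of c) = pmf (bernoulli_pmf p) c" for c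
      by (rule pmf_map_inj'[OF sign_of_inj])
    ultimately show ?thesis using assms pm[of True] pm[of False]
      by (cases b) (simp_all add: sign_of_def)
  next
    case False
    then show ?thesis using r by (subst pmf_map_outside) auto
  qed
qed

lemma tanh_ratio:
  fixes a b \<epsilon> :: real
  assumes "\<bar>a - b\<bar> \<le> \<epsilon> / 2" "\<epsilon> \<ge> 0"
  shows "(1 + tanh a) / 2 \<le> exp \<epsilon> * ((1 + tanh b) / 2)"
proof -
  have eq: "1 + tanh x = 2 / (1 + exp (-2 * x))" for x :: real
  proof -
    have "1 + exp (-2 * x) > 0" by (simp add: add_pos_pos)
    then show ?thesis by (simp add: tanh_real_altdef field_simps)
  qed
  have "1 + exp (-2 * b) \<le> exp \<epsilon> + exp (\<epsilon> - 2 * a)"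
  proof -
    have "1 \<le> exp \<epsilon>" using assms by simp
    moreover have "exp (-2 * b) \<le> exp (\<epsilon> - 2 * a)" using assms by (simp add: abs_le_iff; linarith)
    ultimately show ?thesis by (rule add_mono)
  qed
  also have "\<dots> = exp \<epsilon> * (1 + exp (-2 * a))" by (simp add: algebra_simps exp_diff exp_minus field_simps)
  finally have *: "1 + exp (-2 * b) \<le> exp \<epsilon> * (1 + exp (-2 * a))" .
  have pa: "1 + exp (-2 * a) > 0" "1 + exp (-2 * b) > 0" by (simp_all add: add_pos_pos)
  show ?thesis unfolding eq using * pa
    by (simp add: field_simps)
qed

lemma pdp_sign_bern:
  fixes a b \<epsilon> :: real
  assumes "\<bar>a - b\<bar> \<le> \<epsilon> / 2" "\<epsilon> \<ge> 0"
  shows "pdp (exp \<epsilon>) (map_pmf sign_of (bernoulli_pmf ((1 + tanh a) / 2)))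
                      (map_pmf sign_of (bernoulli_pmf ((1 + tanh b) / 2)))"
proof -
  have rng: "0 \<le> (1 + tanh x) / 2" "(1 + tanh x) / 2 \<le> 1" for x :: real
    using tanh_real_lt_1[of x] tanh_real_gt_neg1[of x] by auto
  have 1: "(1 + tanh a) / 2 \<le> exp \<epsilon> * ((1 + tanh b) / 2)" by (rule tanh_ratio[OF assms])
  have "(1 + tanh (-a)) / 2 \<le> exp \<epsilon> * ((1 + tanh (-b)) / 2)"
    by (rule tanh_ratio) (use assms in \<open>auto simp: abs_le_iff abs_minus_commute\<close>)
  then have 2: "1 - (1 + tanh a) / 2 \<le> exp \<epsilon> * (1 - (1 + tanh b) / 2)"
    by (simp add: tanh_minus field_simps)
  show ?thesis unfolding pdp_def
  proof
    fix y :: int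
    show "pmf (map_pmf sign_of (bernoulli_pmf ((1 + tanh a) / 2))) y \<le>
        exp \<epsilon> * pmf (map_pmf sign_of (bernoulli_pmf ((1 + tanh b) / 2))) y"
      unfolding pmf_sign_bern[OF rng(1) rng(2)] using 1 2 by auto
  qed
qed

definition Qs :: "kxor_inst \<Rightarrow> (nat \<Rightarrow> bool) \<Rightarrow> (nat \<Rightarrow> int) \<Rightarrow> nat \<Rightarrow> real" where
  "Qs \<Phi> U x j = (\<Sum>\<^sub># (image_mset (\<lambda>c. real_of_int (snd c) * (\<Prod>i \<in> fst c - {j}. real_of_int (x i)))
        (filter_mset (\<lambda>c. j \<in> fst c \<and> {i \<in> fst c. U i} = {j}) \<Phi>)))"

lemma eps_Lam: "\<epsilon> * sqrt (real (size \<Phi>)) / 2 * Lam \<Phi> U x j = \<epsilon> / 2 * Qs \<Phi> U x j"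
proof (cases "size \<Phi> = 0")
  case True
  then show ?thesis by (simp add: Lam_def Qs_def)
next
  case False
  then have "real (size \<Phi>) > 0" by linarith
  then have "sqrt (real (size \<Phi>)) > 0" by simp
  then show ?thesis unfolding Lam_def Qs_def[symmetric] by auto
qed

lemma Qs_add: "Qs (add_mset c \<Phi>) U x j = Qs \<Phi> U x j +
   (if j \<in> fst c \<and> {i \<in> fst c. U i} = {j}
    then real_of_int (snd c) * (\<Prod>i \<in> fst c - {j}. real_of_int (x i)) else 0)"
  by (simp add: Qs_def)

lemma term_abs:
  assumes "snd c \<in> {1, -1}" "\<And>i. x i \<in> {1, -1}"
  shows "\<bar>real_of_int (snd c) * (\<Prod>i \<in> fst c - {j}. real_of_int (x i))\<bar> \<le> 1"
proof -
  have "\<bar>\<Prod>i \<in> fst c - {j}. real_of_int (x i)\<bar> = (\<Prod>i \<in> fst c - {j}. \<bar>real_of_int (x i)\<bar>)"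
    by (rule abs_prod)
  also have "\<dots> = 1"
  proof (rule prod.neutral, rule ballI)
    fix i show "\<bar>real_of_int (x i)\<bar> = 1" using assms(2)[of i] by auto
  qed
  finally show ?thesis using assms(1) by (auto simp: abs_mult)
qed

lemma set_rademacher: "set_pmf rademacher = {1, -1}"
  by (auto simp: rademacher_def sign_of_def)

lemma xF_vals:
  assumes "x \<in> set_pmf (Pi_pmf A (1::int) (\<lambda>_. rademacher))" "finite A"
  shows "x i \<in> {1, -1}"
  using set_Pi_pmf_subset'[OF assms(2), of 1 "\<lambda>_. rademacher"] assms(1)
  by (cases "i \<in> A") (auto simp: PiE_dflt_def set_rademacher)

lemma DP_step:
  assumes "\<Phi>' = \<Phi> + {#c#} \<or> \<Phi> = \<Phi>' + {#c#}" "snd c \<in> {1, -1}" "\<epsilon> > 0"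
  shows "pdp (exp \<epsilon>) (DP_AdvRand n k \<epsilon> \<Phi>) (DP_AdvRand n k \<epsilon> \<Phi>')"
  unfolding DP_AdvRand_def Let_def eps_Lam
proof (intro pdp_bind_same pdp_bind_post)
  fix s U xF
  assume xF: "xF \<in> set_pmf (Pi_pmf {i \<in> {0..<n}. \<not> U i} 1 (\<lambda>_. rademacher))"
  have xv: "xF i \<in> {1, -1}" for i by (rule xF_vals[OF xF]) simp
  define j0 where "j0 = (SOME j. j \<in> fst c \<and> {i \<in> fst c. U i} = {j})"
  have close: "\<bar>\<epsilon> / 2 * Qs \<Phi> U xF j - \<epsilon> / 2 * Qs \<Phi>' U xF j\<bar> \<le> \<epsilon> / 2" for j
  proof -
    have t: "\<bar>real_of_int (snd c) * (\<Prod>i \<in> fst c - {j}. real_of_int (xF i))\<bar> \<le> 1"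
      by (rule term_abs[OF assms(2) xv])
    have "\<bar>Qs \<Phi> U xF j - Qs \<Phi>' U xF j\<bar> \<le> 1"
      using assms(1) t by (auto simp: Qs_add abs_minus_commute)
    then have "\<epsilon> / 2 * \<bar>Qs \<Phi> U xF j - Qs \<Phi>' U xF j\<bar> \<le> \<epsilon> / 2 * 1"
      using assms(3) by (intro mult_left_mono) auto
    moreover have "\<bar>\<epsilon> / 2 * Qs \<Phi> U xF j - \<epsilon> / 2 * Qs \<Phi>' U xF j\<bar> = \<epsilon> / 2 * \<bar>Qs \<Phi> U xF j - Qs \<Phi>' U xF j\<bar>"
      unfolding right_diff_distrib[symmetric] abs_mult using assms(3) by simp
    ultimately show ?thesis by simp
  qed
  have same: "Qs \<Phi> U xF j = Qs \<Phi>' U xF j" if "j \<noteq> j0" for j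
  proof -
    have nP: "\<not> (j \<in> fst c \<and> {i \<in> fst c. U i} = {j})"
    proof
      assume h: "j \<in> fst c \<and> {i \<in> fst c. U i} = {j}"
      then have "j0 \<in> fst c \<and> {i \<in> fst c. U i} = {j0}"
        unfolding j0_def by (rule someI)
      with h that show False by auto
    qed
    from assms(1) show ?thesis
      by (elim disjE; hypsubst; simp only: add_mset_add_single[symmetric] Qs_add if_not_P[OF nP] add_0_right)
  qed
  show "pdp (exp \<epsilon>)
     (Pi_pmf {j \<in> {0..<n}. U j} 1 (\<lambda>j. map_pmf sign_of (bernoulli_pmf ((1 + tanh (\<epsilon> / 2 * Qs \<Phi> U xF j)) / 2))))
     (Pi_pmf {j \<in> {0..<n}. U j} 1 (\<lambda>j. map_pmf sign_of (bernoulli_pmf ((1 + tanh (\<epsilon> / 2 * Qs \<Phi>' U xF j)) / 2))))"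
    by (rule pdp_Pi[where jz = j0]) (use assms(3) same close pdp_sign_bern in auto)
qed (use assms(3) in auto)

theorem theorem4p4:
  fixes n k :: nat and \<epsilon> :: real
  assumes "k \<ge> 2" and "\<epsilon> > 0"
  shows "pure_DP n k \<epsilon> (DP_AdvRand n k \<epsilon>)"
  unfolding pure_DP_def
proof (intro allI impI)
  fix \<Phi> \<Phi>' :: kxor_inst and T
  assume h: "valid_instance n k \<Phi> \<and> valid_instance n k \<Phi>' \<and> neighboring \<Phi> \<Phi>'"
  then obtain c where c: "\<Phi>' = \<Phi> + {#c#} \<or> \<Phi> = \<Phi>' + {#c#}" by (auto simp: neighboring_def)
  have "snd c \<in> {1, -1}"
    using c h unfolding valid_instance_def by auto
  then have "pdp (exp \<epsilon>) (DP_AdvRand n k \<epsilon> \<Phi>) (DP_AdvRand n k \<epsilon> \<Phi>')"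
    by (rule DP_step[OF c _ assms(2)])
  then show "measure_pmf.prob (DP_AdvRand n k \<epsilon> \<Phi>) T \<le> exp \<epsilon> * measure_pmf.prob (DP_AdvRand n k \<epsilon> \<Phi>') T"
    by (rule pdp_prob) simp
qed

end
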